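(* Let $K$ be a field, $S=K[X_1,\ldots,X_n]$, $I\subset S$ a monomial ideal, $R=S/I$, and let $x_i$ denote the image of $X_i$ in $R$. Let $x=x_{i_1}\cdots x_{i_r}$ with $1\le i_1<\cdots<i_r\le n$, and set $F=\{i_1,\ldots,i_r\}$. Then for every $a\in\mathbb{Z}^n$ we have $\dim_K (R_x)_a\le 1$, and the following are equivalent: (i) $(R_x)_a\cong K$; (ii) $F\supset G_a$, and for every $u\in G(I)$ there exists $j\notin F$ such that $\nu_j(u)>a_j\ge 0$.
   Context: $S$ and $R$ carry the $\mathbb{Z}^n$-grading with $\deg X_i=e_i$ (the $i$-th unit vector); $R_x$ denotes the localization of $R$ at the element $x$ (equivalently at $x_{i_1},\ldots,x_{i_r}$), with the induced $\mathbb{Z}^n$-grading, and $(R_x)_a$ is its component of degree $a$. $G(I)$ is the minimal set of monomial generators of $I$. For a monomial $u=X_1^{c_1}\cdots X_n^{c_n}$, $\nu_j(u)=c_j$. For $a=(a_1,\ldots,a_n)\in\mathbb{Z}^n$, $G_a=\{i\mid a_i<0\}$. *)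

theory Defs
  imports Main "HOL-Library.Poly_Mapping"
begin

text \<open>The polynomial ring S = K[X_v | v in 'v] over a field K, with a finite type 'v of
  variables (n = CARD('v)).\<close>

type_synonym ('v, 'k) mpoly = "('v \<Rightarrow>\<^sub>0 nat) \<Rightarrow>\<^sub>0 'k"

definition monom :: "('v \<Rightarrow>\<^sub>0 nat) \<Rightarrow> ('v, 'k::field) mpoly" where
  "monom \<alpha> = Poly_Mapping.single \<alpha> 1"

definition Var :: "'v \<Rightarrow> ('v, 'k::field) mpoly" where
  "Var i = monom (Poly_Mapping.single i 1)"

definition const :: "'k::field \<Rightarrow> ('v, 'k) mpoly" where
  "const c = Poly_Mapping.single 0 c"

definition is_ideal :: "('v, 'k::field) mpoly set \<Rightarrow> bool" where
  "is_ideal J \<longleftrightarrow> 0 \<in> J \<and> (\<forall>f\<in>J. \<forall>g\<in>J. f + g \<in> J) \<and> (\<forall>f\<in>J. \<forall>g. g * f \<in> J)"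

definition ideal_gen :: "('v, 'k::field) mpoly set \<Rightarrow> ('v, 'k) mpoly set" where
  "ideal_gen M = \<Inter>{J. is_ideal J \<and> M \<subseteq> J}"

definition monomial_ideal :: "('v, 'k::field) mpoly set \<Rightarrow> bool" where
  "monomial_ideal I \<longleftrightarrow> is_ideal I \<and> I = ideal_gen {monom \<alpha> | \<alpha>. monom \<alpha> \<in> I}"

text \<open>G(I): the minimal monomial generators, represented by their exponent vectors
  (nu_j(u) is then the j-th entry of the exponent vector). Minimality is w.r.t.
  divisibility of monomials.\<close>

definition min_gens :: "('v, 'k::field) mpoly set \<Rightarrow> ('v \<Rightarrow>\<^sub>0 nat) set" where
  "min_gens I = {\<alpha>. monom \<alpha> \<in> I \<and>
      (\<forall>\<beta>. monom \<beta> \<in> I \<and> (\<forall>j. Poly_Mapping.lookup \<beta> j \<le> Poly_Mapping.lookup \<alpha> j) \<longrightarrow> \<beta> = \<alpha>)}"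

definition nu :: "'v \<Rightarrow> ('v \<Rightarrow>\<^sub>0 nat) \<Rightarrow> nat" where
  "nu j u = Poly_Mapping.lookup u j"

text \<open>The element x = prod_{i in F} X_i of S (its image in R = S/I is x_{i_1}...x_{i_r}).\<close>

definition xF :: "'v set \<Rightarrow> ('v, 'k::field) mpoly" where
  "xF F = (\<Prod>i\<in>F. Var i)"

text \<open>An element f/x^k of R_x, with f in S,
  is the equivalence class of the pair (f,k); (f,k) ~ (g,l) iff the images satisfy
  x^m (x^l f - x^k g) = 0 in R = S/I for some m, i.e. x^m (x^l f - x^k g) in I.\<close>

definition loc_eq :: "('v, 'k::field) mpoly set \<Rightarrow> 'v set \<Rightarrow>
    ('v, 'k) mpoly \<times> nat \<Rightarrow> ('v, 'k) mpoly \<times> nat \<Rightarrow> bool" where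
  "loc_eq I F p q \<longleftrightarrow> (\<exists>m. xF F ^ m * (xF F ^ snd q * fst p - xF F ^ snd p * fst q) \<in> I)"

definition frac :: "('v, 'k::field) mpoly set \<Rightarrow> 'v set \<Rightarrow> ('v, 'k) mpoly \<Rightarrow> nat
    \<Rightarrow> (('v, 'k) mpoly \<times> nat) set" where
  "frac I F f k = {q. loc_eq I F (f, k) q}"

definition loc :: "('v, 'k::field) mpoly set \<Rightarrow> 'v set \<Rightarrow> (('v, 'k) mpoly \<times> nat) set set" where
  "loc I F = {frac I F f k | f k. True}"

definition loc_add :: "('v, 'k::field) mpoly set \<Rightarrow> 'v set \<Rightarrow>
    (('v, 'k) mpoly \<times> nat) set \<Rightarrow> (('v, 'k) mpoly \<times> nat) set \<Rightarrow> (('v, 'k) mpoly \<times> nat) set" where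
  "loc_add I F P Q = (SOME T. \<exists>f k g l. P = frac I F f k \<and> Q = frac I F g l \<and>
      T = frac I F (xF F ^ l * f + xF F ^ k * g) (k + l))"

definition loc_smult :: "('v, 'k::field) mpoly set \<Rightarrow> 'v set \<Rightarrow>
    'k \<Rightarrow> (('v, 'k) mpoly \<times> nat) set \<Rightarrow> (('v, 'k) mpoly \<times> nat) set" where
  "loc_smult I F c P = (SOME T. \<exists>f k. P = frac I F f k \<and> T = frac I F (const c * f) k)"

text \<open>The component (R_x)_a consists of the fractions f/x^k
  with f homogeneous of degree a + k * deg x, where deg x = indicator vector of F.\<close>

definition homogeneous :: "('v, 'k::field) mpoly \<Rightarrow> ('v \<Rightarrow> int) \<Rightarrow> bool" where
  "homogeneous f d \<longleftrightarrow> (\<forall>\<alpha>\<in>Poly_Mapping.keys f. \<forall>i. int (Poly_Mapping.lookup \<alpha> i) = d i)"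

definition loc_comp :: "('v, 'k::field) mpoly set \<Rightarrow> 'v set \<Rightarrow> ('v \<Rightarrow> int)
    \<Rightarrow> (('v, 'k) mpoly \<times> nat) set set" where
  "loc_comp I F a = {frac I F f k | f k.
      homogeneous f (\<lambda>i. a i + int k * (if i \<in> F then 1 else 0))}"

definition G_neg :: "('v \<Rightarrow> int) \<Rightarrow> 'v set" where
  "G_neg a = {i. a i < 0}"

definition dim_le_1 :: "('v, 'k::field) mpoly set \<Rightarrow> 'v set \<Rightarrow> (('v, 'k) mpoly \<times> nat) set set \<Rightarrow> bool" where
  "dim_le_1 I F V \<longleftrightarrow> (\<exists>v\<in>V. \<forall>P\<in>V. \<exists>c. P = loc_smult I F c v)"

definition iso_to_K :: "('v, 'k::field) mpoly set \<Rightarrow> 'v set \<Rightarrow> (('v, 'k) mpoly \<times> nat) set set \<Rightarrow> bool" where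
  "iso_to_K I F V \<longleftrightarrow> (\<exists>\<phi>. bij_betw \<phi> (UNIV :: 'k set) V \<and>
      (\<forall>c d. \<phi> (c + d) = loc_add I F (\<phi> c) (\<phi> d)) \<and>
      (\<forall>c d. \<phi> (c * d) = loc_smult I F c (\<phi> d)))"

end

theory Submission
  imports Defs
begin


lemma ideal_mult: "is_ideal I \<Longrightarrow> f \<in> I \<Longrightarrow> g * f \<in> I"
  by (simp add: is_ideal_def)
lemma ideal_add: "is_ideal I \<Longrightarrow> f \<in> I \<Longrightarrow> g \<in> I \<Longrightarrow> f + g \<in> I"
  by (simp add: is_ideal_def)
lemma ideal_0: "is_ideal I \<Longrightarrow> 0 \<in> I"
  by (simp add: is_ideal_def)
lemma ideal_uminus: "is_ideal I \<Longrightarrow> f \<in> I \<Longrightarrow> - f \<in> I"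
  using ideal_mult[of I f "-1"] by simp
lemma ideal_diff: "is_ideal I \<Longrightarrow> f \<in> I \<Longrightarrow> g \<in> I \<Longrightarrow> f - g \<in> I"
  using ideal_add[of I f "-g"] ideal_uminus[of I g] by simp

lemma monom_mult: "monom \<alpha> * (monom \<beta> :: ('v,'k::field) mpoly) = monom (\<alpha> + \<beta>)"
  by (simp add: monom_def mult_single)

lemma monom_single: "(monom \<alpha> :: ('v,'k::field) mpoly) * Poly_Mapping.single \<beta> c = Poly_Mapping.single (\<alpha> + \<beta>) c"
  by (simp add: monom_def mult_single)

lemma const_single: "(const c :: ('v,'k::field) mpoly) * Poly_Mapping.single \<beta> d = Poly_Mapping.single \<beta> (c * d)"
  by (simp add: const_def mult_single)

lemma mi_ideal: "monomial_ideal I \<Longrightarrow> is_ideal I"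
  unfolding monomial_ideal_def by (elim conjE)

lemma keys_monoms:
  fixes I :: "('v, 'k::field) mpoly set"
  assumes "monomial_ideal I" "f \<in> I" "\<alpha> \<in> Poly_Mapping.keys f"
  shows "monom \<alpha> \<in> I"
proof -
  let ?J = "{f. \<forall>\<alpha>\<in>Poly_Mapping.keys f. monom \<alpha> \<in> I}"
  have iI: "is_ideal I" using assms(1) unfolding monomial_ideal_def by (elim conjE)
  have J1: "f + g \<in> ?J" if "f \<in> ?J" "g \<in> ?J" for f g
    using that keys_add[of f g] by auto
  have J2: "g * f \<in> ?J" if f: "f \<in> ?J" for f g
  proof (rule CollectI, rule ballI)
    fix \<gamma> assume "\<gamma> \<in> Poly_Mapping.keys (g * f)"
    then obtain b c where bc: "\<gamma> = b + c" "b \<in> Poly_Mapping.keys g" "c \<in> Poly_Mapping.keys f"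
      using keys_mult[of g f] by blast
    have "monom c \<in> I" using f bc by blast
    then have "monom b * monom c \<in> I" using iI ideal_mult by blast
    then show "monom \<gamma> \<in> I" using bc by (simp add: monom_mult)
  qed
  have "is_ideal ?J"
  proof -
    have J0: "0 \<in> ?J" by simp
    show ?thesis unfolding is_ideal_def
      apply (intro conjI)
        apply (rule J0)
       apply (intro ballI allI, erule (1) J1)
      apply (intro ballI allI, erule J2)
      done
  qed
  moreover have "{monom \<alpha> | \<alpha>. monom \<alpha> \<in> I} \<subseteq> ?J"
    by (auto simp: monom_def)
  ultimately have "ideal_gen {monom \<alpha> | \<alpha>. monom \<alpha> \<in> I} \<subseteq> ?J"
    unfolding ideal_gen_def by (intro Inter_lower CollectI conjI)
  moreover have "I = ideal_gen {monom \<alpha> | \<alpha>. monom \<alpha> \<in> I}"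
    using assms(1) unfolding monomial_ideal_def by (elim conjE)
  ultimately have "I \<subseteq> ?J" by (rule ord_eq_le_trans[rotated])
  then show ?thesis using assms(2,3) by auto
qed

lemma single_in_iff:
  assumes "monomial_ideal I" "c \<noteq> 0"
  shows "Poly_Mapping.single \<alpha> c \<in> I \<longleftrightarrow> monom \<alpha> \<in> I"
proof
  assume "Poly_Mapping.single \<alpha> c \<in> I"
  then show "monom \<alpha> \<in> I" using keys_monoms[OF assms(1)] assms(2) by simp
next
  assume "monom \<alpha> \<in> I"
  then have "const c * monom \<alpha> \<in> I" using mi_ideal[OF assms(1)] ideal_mult by blast
  then show "Poly_Mapping.single \<alpha> c \<in> I" by (simp add: monom_def const_single)
qed

definition pm :: "('v::finite \<Rightarrow> nat) \<Rightarrow> ('v \<Rightarrow>\<^sub>0 nat)" where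
  "pm f = Abs_poly_mapping f"

lemma lookup_pm[simp]: "Poly_Mapping.lookup (pm f) = f"
  unfolding pm_def by (rule lookup_Abs_poly_mapping) simp

lemma pm_add: "pm f + pm g = pm (\<lambda>i. f i + g i)"
  by (rule poly_mapping_eqI) (simp add: lookup_add)

lemma pm_lookup: "pm (Poly_Mapping.lookup \<alpha>) = \<alpha>"
  by (rule poly_mapping_eqI) simp

lemma monom_le:
  fixes \<alpha> :: "'v::finite \<Rightarrow>\<^sub>0 nat"
  assumes "is_ideal I" "monom \<alpha> \<in> I" "\<forall>j. Poly_Mapping.lookup \<alpha> j \<le> Poly_Mapping.lookup \<beta> j"
  shows "monom \<beta> \<in> I"
proof -
  have "\<beta> = pm (\<lambda>j. Poly_Mapping.lookup \<beta> j - Poly_Mapping.lookup \<alpha> j) + \<alpha>"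
    by (rule poly_mapping_eqI) (use assms(3) in \<open>simp add: lookup_add\<close>)
  then have e: "monom \<beta> = monom (pm (\<lambda>j. Poly_Mapping.lookup \<beta> j - Poly_Mapping.lookup \<alpha> j)) * monom \<alpha>"
    by (simp add: monom_mult)
  have "monom (pm (\<lambda>j. Poly_Mapping.lookup \<beta> j - Poly_Mapping.lookup \<alpha> j)) * monom \<alpha> \<in> I"
    by (rule ideal_mult[OF assms(1,2)])
  then show ?thesis by (subst e)
qed

lemma exists_min_gen:
  fixes \<beta> :: "'v::finite \<Rightarrow>\<^sub>0 nat"
  assumes "monom \<beta> \<in> (I :: ('v,'k::field) mpoly set)"
  shows "\<exists>u\<in>min_gens I. \<forall>j. Poly_Mapping.lookup u j \<le> Poly_Mapping.lookup \<beta> j"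
proof -
  define P where "P = (\<lambda>\<gamma>. monom \<gamma> \<in> I \<and> (\<forall>j. Poly_Mapping.lookup \<gamma> j \<le> Poly_Mapping.lookup \<beta> j))"
  define m where "m = (\<lambda>\<gamma>::'v \<Rightarrow>\<^sub>0 nat. \<Sum>j\<in>UNIV. Poly_Mapping.lookup \<gamma> j)"
  have "P \<beta>" using assms by (simp add: P_def)
  from ex_has_least_nat[of P \<beta> m, OF this] obtain u where u: "P u" "\<And>y. P y \<Longrightarrow> m u \<le> m y"
    by auto
  have "u \<in> min_gens I"
    unfolding min_gens_def
  proof (intro CollectI conjI allI impI)
    show "monom u \<in> I" using u(1) by (simp add: P_def)
  next
    fix \<delta> assume d: "monom \<delta> \<in> I \<and> (\<forall>j. Poly_Mapping.lookup \<delta> j \<le> Poly_Mapping.lookup u j)"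
    have "P \<delta>" unfolding P_def
    proof (intro conjI allI)
      show "monom \<delta> \<in> I" using d by simp
      fix j show "Poly_Mapping.lookup \<delta> j \<le> Poly_Mapping.lookup \<beta> j"
        using d u(1) unfolding P_def by (meson le_trans)
    qed
    then have mu: "m u \<le> m \<delta>" by (rule u(2))
    show "\<delta> = u"
    proof (rule ccontr)
      assume "\<delta> \<noteq> u"
      then have "Poly_Mapping.lookup \<delta> \<noteq> Poly_Mapping.lookup u" by simp
      then obtain j where "Poly_Mapping.lookup \<delta> j \<noteq> Poly_Mapping.lookup u j"
        by (meson ext)
      then have jl: "Poly_Mapping.lookup \<delta> j < Poly_Mapping.lookup u j" using d le_neq_implies_less by blast
      have le: "\<forall>x\<in>UNIV. Poly_Mapping.lookup \<delta> x \<le> Poly_Mapping.lookup u x" using d by blast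
      have ex: "\<exists>x\<in>UNIV. Poly_Mapping.lookup \<delta> x < Poly_Mapping.lookup u x" using jl by blast
      have "m \<delta> < m u"
        unfolding m_def by (rule sum_strict_mono_ex1[OF finite_UNIV le ex])
      then show False using mu by simp
    qed
  qed
  then show ?thesis using u(1) unfolding P_def by blast
qed



definition ind :: "'v set \<Rightarrow> 'v \<Rightarrow> nat" where
  "ind F i = (if i \<in> F then 1 else 0)"

lemma monom_zero: "(monom 0 :: ('v,'k::field) mpoly) = 1"
  by (simp add: monom_def)

lemma pm_zero: "pm (\<lambda>i. 0) = 0"
  by (rule poly_mapping_eqI) simp

lemma xF_monom: "(xF F :: ('v::finite,'k::field) mpoly) = monom (pm (ind F))"
proof -
  have "finite F" by simp
  then have "(\<Prod>i\<in>F. Var i :: ('v,'k) mpoly) = monom (\<Sum>i\<in>F. Poly_Mapping.single i 1)"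
  proof (induction F rule: finite_induct)
    case empty
    then show ?case by (simp add: monom_zero)
  next
    case (insert i F)
    then show ?case by (simp add: Var_def monom_mult)
  qed
  moreover have "(\<Sum>i\<in>F. Poly_Mapping.single i (1::nat)) = pm (ind F)"
    by (rule poly_mapping_eqI) (simp add: lookup_sum lookup_single when_def ind_def)
  ultimately show ?thesis by (simp add: xF_def)
qed

lemma xF_pow: "(xF F ^ m :: ('v::finite,'k::field) mpoly) = monom (pm (\<lambda>i. m * ind F i))"
proof (induction m)
  case 0
  then show ?case by (simp add: pm_zero monom_zero)
next
  case (Suc m)
  then show ?case by (simp add: xF_monom monom_mult pm_add)
qed

lemma loc_refl: "is_ideal I \<Longrightarrow> loc_eq I F p p"
  unfolding loc_eq_def by (rule exI[of _ 0]) (simp add: ideal_0)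

lemma loc_sym: assumes "is_ideal I" "loc_eq I F p q" shows "loc_eq I F q p"
proof -
  obtain m where m: "xF F ^ m * (xF F ^ snd q * fst p - xF F ^ snd p * fst q) \<in> I"
    using assms(2) unfolding loc_eq_def by blast
  have "xF F ^ m * (xF F ^ snd p * fst q - xF F ^ snd q * fst p) = - (xF F ^ m * (xF F ^ snd q * fst p - xF F ^ snd p * fst q))"
    by (simp add: algebra_simps)
  then show ?thesis unfolding loc_eq_def using ideal_uminus[OF assms(1) m] by metis
qed

lemma loc_trans:
  fixes I :: "('v,'k::field) mpoly set" assumes "is_ideal I" "loc_eq I F p q" "loc_eq I F q r" shows "loc_eq I F p r"
proof -
  obtain f k g l h j where pqr: "p = (f,k)" "q = (g,l)" "r = (h,j)" by (metis prod.exhaust)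
  define X :: "('v,'k) mpoly" where "X = xF F"
  obtain m where m: "X ^ m * (X ^ l * f - X ^ k * g) \<in> I"
    using assms(2) unfolding loc_eq_def pqr X_def by auto
  obtain n where n: "X ^ n * (X ^ j * g - X ^ l * h) \<in> I"
    using assms(3) unfolding loc_eq_def pqr X_def by auto
  have e: "X^(m+n+l) * (X^j*f - X^k*h) = X^(n+j) * (X^m*(X^l*f - X^k*g)) + X^(m+k) * (X^n*(X^j*g - X^l*h))"
    by (simp add: algebra_simps power_add)
  have "X^(n+j) * (X^m*(X^l*f - X^k*g)) + X^(m+k) * (X^n*(X^j*g - X^l*h)) \<in> I"
    by (rule ideal_add[OF assms(1) ideal_mult[OF assms(1) m] ideal_mult[OF assms(1) n]])
  then have "X^(m+n+l) * (X^j*f - X^k*h) \<in> I" by (subst e)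
  then show ?thesis unfolding loc_eq_def pqr X_def by auto
qed

lemma frac_eq_iff:
  assumes "is_ideal I"
  shows "frac I F f k = frac I F g l \<longleftrightarrow> loc_eq I F (f,k) (g,l)"
proof
  assume e: "frac I F f k = frac I F g l"
  have "(g,l) \<in> frac I F g l" unfolding frac_def using loc_refl[OF assms] by simp
  then have "(g,l) \<in> frac I F f k" using e by simp
  then show "loc_eq I F (f,k) (g,l)" unfolding frac_def by simp
next
  assume a: "loc_eq I F (f,k) (g,l)"
  show "frac I F f k = frac I F g l"
    unfolding frac_def using a loc_trans[OF assms] loc_sym[OF assms] by blast
qed

lemma loc_smult_cong:
  fixes I :: "('v,'k::field) mpoly set"
  assumes "is_ideal I" "loc_eq I F (f,k) (g,l)"
  shows "loc_eq I F (const c * f, k) (const c * g, l)"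
proof -
  define X :: "('v,'k) mpoly" where "X = xF F"
  obtain m where m: "X ^ m * (X ^ l * f - X ^ k * g) \<in> I"
    using assms(2) unfolding loc_eq_def X_def by auto
  have e: "X ^ m * (X ^ l * (const c * f) - X ^ k * (const c * g)) = const c * (X ^ m * (X ^ l * f - X ^ k * g))"
    by (simp add: algebra_simps)
  have "const c * (X ^ m * (X ^ l * f - X ^ k * g)) \<in> I" by (rule ideal_mult[OF assms(1) m])
  then have "X ^ m * (X ^ l * (const c * f) - X ^ k * (const c * g)) \<in> I" by (subst e)
  then show ?thesis unfolding loc_eq_def X_def by auto
qed

lemma loc_add_cong:
  fixes I :: "('v,'k::field) mpoly set"
  assumes "is_ideal I" "loc_eq I F (f,k) (f',k')" "loc_eq I F (g,l) (g',l')"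
  shows "loc_eq I F (xF F ^ l * f + xF F ^ k * g, k + l) (xF F ^ l' * f' + xF F ^ k' * g', k' + l')"
proof -
  define X :: "('v,'k) mpoly" where "X = xF F"
  obtain m where m: "X ^ m * (X ^ k' * f - X ^ k * f') \<in> I"
    using assms(2) unfolding loc_eq_def X_def by auto
  obtain n where n: "X ^ n * (X ^ l' * g - X ^ l * g') \<in> I"
    using assms(3) unfolding loc_eq_def X_def by auto
  have e: "X^(m+n) * (X^(k'+l') * (X^l * f + X^k * g) - X^(k+l) * (X^l' * f' + X^k' * g'))
    = X^(n+l+l') * (X ^ m * (X ^ k' * f - X ^ k * f')) + X^(m+k+k') * (X ^ n * (X ^ l' * g - X ^ l * g'))"
    by (simp add: algebra_simps power_add)
  have "X^(n+l+l') * (X ^ m * (X ^ k' * f - X ^ k * f')) + X^(m+k+k') * (X ^ n * (X ^ l' * g - X ^ l * g')) \<in> I"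
    by (rule ideal_add[OF assms(1) ideal_mult[OF assms(1) m] ideal_mult[OF assms(1) n]])
  then have "X^(m+n) * (X^(k'+l') * (X^l * f + X^k * g) - X^(k+l) * (X^l' * f' + X^k' * g')) \<in> I" by (subst e)
  then show ?thesis unfolding loc_eq_def X_def by auto
qed

lemma loc_smult_frac:
  assumes "is_ideal I"
  shows "loc_smult I F c (frac I F f k) = frac I F (const c * f) k"
proof -
  let ?Q = "\<lambda>T. \<exists>f' k'. frac I F f k = frac I F f' k' \<and> T = frac I F (const c * f') k'"
  have "?Q (frac I F (const c * f) k)" by blast
  then have "?Q (SOME T. ?Q T)" by (rule someI)
  then obtain f' k' where fk: "frac I F f k = frac I F f' k'" and T: "(SOME T. ?Q T) = frac I F (const c * f') k'"
    by blast
  have "loc_eq I F (f,k) (f',k')" using fk frac_eq_iff[OF assms] by blast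
  then have "loc_eq I F (const c * f,k) (const c * f',k')" by (rule loc_smult_cong[OF assms])
  then have "frac I F (const c * f) k = frac I F (const c * f') k'" using frac_eq_iff[OF assms] by blast
  then show ?thesis unfolding loc_smult_def using T by simp
qed

lemma loc_add_frac:
  assumes "is_ideal I"
  shows "loc_add I F (frac I F f k) (frac I F g l) = frac I F (xF F ^ l * f + xF F ^ k * g) (k + l)"
proof -
  let ?Q = "\<lambda>T. \<exists>f' k' g' l'. frac I F f k = frac I F f' k' \<and> frac I F g l = frac I F g' l' \<and>
      T = frac I F (xF F ^ l' * f' + xF F ^ k' * g') (k' + l')"
  have "?Q (frac I F (xF F ^ l * f + xF F ^ k * g) (k + l))" by blast
  then have "?Q (SOME T. ?Q T)" by (rule someI)
  then obtain f' k' g' l' where fk: "frac I F f k = frac I F f' k'" and gl: "frac I F g l = frac I F g' l'"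
    and T: "(SOME T. ?Q T) = frac I F (xF F ^ l' * f' + xF F ^ k' * g') (k' + l')"
    by blast
  have "loc_eq I F (f,k) (f',k')" using fk frac_eq_iff[OF assms] by blast
  moreover have "loc_eq I F (g,l) (g',l')" using gl frac_eq_iff[OF assms] by blast
  ultimately have "loc_eq I F (xF F ^ l * f + xF F ^ k * g, k + l) (xF F ^ l' * f' + xF F ^ k' * g', k' + l')"
    by (rule loc_add_cong[OF assms])
  then have "frac I F (xF F ^ l * f + xF F ^ k * g) (k + l) = frac I F (xF F ^ l' * f' + xF F ^ k' * g') (k' + l')"
    using frac_eq_iff[OF assms] by blast
  then show ?thesis unfolding loc_add_def using T by simp
qed



definition dg :: "'v set \<Rightarrow> ('v \<Rightarrow> int) \<Rightarrow> nat \<Rightarrow> 'v \<Rightarrow> int" where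
  "dg F a k i = a i + int k * (if i \<in> F then 1 else 0)"

definition ev :: "'v::finite set \<Rightarrow> ('v \<Rightarrow> int) \<Rightarrow> nat \<Rightarrow> 'v \<Rightarrow>\<^sub>0 nat" where
  "ev F a k = pm (\<lambda>i. nat (dg F a k i))"

definition ok :: "'v set \<Rightarrow> ('v \<Rightarrow> int) \<Rightarrow> nat \<Rightarrow> bool" where
  "ok F a k \<longleftrightarrow> (\<forall>i. dg F a k i \<ge> 0)"

lemma loc_comp_alt: "loc_comp I F a = {frac I F f k | f k. homogeneous f (dg F a k)}"
  unfolding loc_comp_def dg_def[abs_def] by simp

lemma hom_keys:
  fixes f :: "('v::finite,'k::field) mpoly"
  assumes "homogeneous f d" "\<alpha> \<in> Poly_Mapping.keys f"
  shows "\<alpha> = pm (\<lambda>i. nat (d i)) \<and> (\<forall>i. d i \<ge> 0)"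
proof -
  have h: "\<forall>i. int (Poly_Mapping.lookup \<alpha> i) = d i" using assms unfolding homogeneous_def by blast
  then have "\<forall>i. d i \<ge> 0" by (metis of_nat_0_le_iff)
  moreover have "\<alpha> = pm (\<lambda>i. nat (d i))"
    by (rule poly_mapping_eqI) (simp add: h[rule_format, symmetric])
  ultimately show ?thesis by blast
qed

lemma hom_zero:
  fixes f :: "('v::finite,'k::field) mpoly"
  assumes "homogeneous f d" "\<not> (\<forall>i. d i \<ge> 0)"
  shows "f = 0"
proof -
  have "Poly_Mapping.keys f = {}" using hom_keys[OF assms(1)] assms(2) by blast
  then show ?thesis by simp
qed

lemma hom_char:
  fixes f :: "('v::finite,'k::field) mpoly"
  assumes "homogeneous f d"
  shows "f = Poly_Mapping.single (pm (\<lambda>i. nat (d i))) (Poly_Mapping.lookup f (pm (\<lambda>i. nat (d i))))"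
proof (rule poly_mapping_eqI)
  fix \<beta>
  show "Poly_Mapping.lookup f \<beta> = Poly_Mapping.lookup (Poly_Mapping.single (pm (\<lambda>i. nat (d i))) (Poly_Mapping.lookup f (pm (\<lambda>i. nat (d i))))) \<beta>"
  proof (cases "\<beta> \<in> Poly_Mapping.keys f")
    case True
    then have "\<beta> = pm (\<lambda>i. nat (d i))" using hom_keys[OF assms] by blast
    then show ?thesis by simp
  next
    case False
    then have z: "Poly_Mapping.lookup f \<beta> = 0" by (simp add: in_keys_iff)
    show ?thesis
    proof (cases "\<beta> = pm (\<lambda>i. nat (d i))")
      case True then show ?thesis using z by simp
    next
      case False then show ?thesis using z by (simp add: lookup_single_not_eq)
    qed
  qed
qed

lemma hom_single:
  assumes "\<forall>i. d i \<ge> 0"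
  shows "homogeneous (Poly_Mapping.single (pm (\<lambda>i. nat (d i))) c :: ('v::finite,'k::field) mpoly) d"
  unfolding homogeneous_def using assms by (simp split: if_splits)

lemma ok_mono: assumes "ok F a k" shows "ok F a (k + j)"
  unfolding ok_def
proof
  fix i
  have h: "0 \<le> a i + int k * (if i \<in> F then 1 else 0)" using assms unfolding ok_def dg_def by blast
  show "0 \<le> dg F a (k+j) i"
    unfolding dg_def by (cases "i \<in> F") (use h in simp_all)
qed

lemma shift:
  assumes "ok F a k"
  shows "(xF F ^ j * Poly_Mapping.single (ev F a k) c :: ('v::finite,'k::field) mpoly)
    = Poly_Mapping.single (ev F a (k + j)) c"
proof -
  have "pm (\<lambda>i. j * ind F i) + ev F a k = ev F a (k + j)"
    unfolding ev_def pm_add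
  proof (rule arg_cong[where f = pm], rule ext)
    fix i
    have h: "0 \<le> a i + int k * (if i \<in> F then 1 else 0)" using assms unfolding ok_def dg_def by blast
    show "j * ind F i + nat (dg F a k i) = nat (dg F a (k + j) i)"
    proof (cases "i \<in> F")
      case True
      then have "0 \<le> a i + int k" using h by simp
      then show ?thesis using True unfolding dg_def ind_def by simp
    next
      case False
      then show ?thesis unfolding dg_def ind_def by simp
    qed
  qed
  then show ?thesis by (simp add: xF_pow monom_single)
qed

lemma frac_E:
  fixes I :: "('v::finite,'k::field) mpoly set"
  assumes "is_ideal I" "ok F a k" "ok F a k'"
  shows "frac I F (Poly_Mapping.single (ev F a k) c) k = frac I F (Poly_Mapping.single (ev F a k') c) k'"
proof -
  have "xF F ^ k' * Poly_Mapping.single (ev F a k) c - xF F ^ k * Poly_Mapping.single (ev F a k') c = (0 :: ('v,'k) mpoly)"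
    using shift[OF assms(2), of k' c] shift[OF assms(3), of k c] by (simp add: add.commute)
  then have "loc_eq I F (Poly_Mapping.single (ev F a k) c, k) (Poly_Mapping.single (ev F a k') c, k')"
    unfolding loc_eq_def using ideal_0[OF assms(1)] by (intro exI[of _ 0]) simp
  then show ?thesis using frac_eq_iff[OF assms(1)] by blast
qed

lemma frac_zero:
  fixes I :: "('v,'k::field) mpoly set"
  assumes "is_ideal I"
  shows "frac I F 0 k = frac I F 0 0"
proof -
  have "loc_eq I F (0, k) (0, 0)"
    unfolding loc_eq_def using ideal_0[OF assms(1)] by (intro exI[of _ 0]) simp
  then show ?thesis using frac_eq_iff[OF assms(1)] by blast
qed

lemma frac_N:
  fixes I :: "('v::finite,'k::field) mpoly set"
  assumes "monomial_ideal I"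
  shows "frac I F (Poly_Mapping.single \<beta> c) k = frac I F 0 0 \<longleftrightarrow>
    (c = 0 \<or> (\<exists>m. monom (pm (\<lambda>i. m * ind F i) + \<beta>) \<in> I))"
proof -
  have iI: "is_ideal I" by (rule mi_ideal[OF assms])
  have "frac I F (Poly_Mapping.single \<beta> c) k = frac I F 0 0 \<longleftrightarrow>
     (\<exists>m. Poly_Mapping.single (pm (\<lambda>i. m * ind F i) + \<beta>) c \<in> I)"
    unfolding frac_eq_iff[OF iI] loc_eq_def by (simp add: xF_pow monom_single)
  also have "\<dots> \<longleftrightarrow> (c = 0 \<or> (\<exists>m. monom (pm (\<lambda>i. m * ind F i) + \<beta>) \<in> I))"
  proof (cases "c = 0")
    case True then show ?thesis using ideal_0[OF iI] by simp
  next
    case False then show ?thesis using single_in_iff[OF assms False] by simp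
  qed
  finally show ?thesis .
qed


lemma lemD:
  fixes I :: "('v::finite,'k::field) mpoly set"
  assumes mi: "monomial_ideal I" and G: "G_neg a \<subseteq> F" and ok: "ok F a k0"
  shows "(\<exists>m. monom (pm (\<lambda>i. m * ind F i) + ev F a k0) \<in> I) \<longleftrightarrow>
    \<not> (\<forall>u\<in>min_gens I. \<exists>j. j \<notin> F \<and> int (nu j u) > a j \<and> a j \<ge> 0)"
proof
  assume "\<exists>m. monom (pm (\<lambda>i. m * ind F i) + ev F a k0) \<in> I"
  then obtain m where m: "monom (pm (\<lambda>i. m * ind F i) + ev F a k0) \<in> I" by blast
  obtain u where u: "u \<in> min_gens I"
    "\<forall>j. Poly_Mapping.lookup u j \<le> Poly_Mapping.lookup (pm (\<lambda>i. m * ind F i) + ev F a k0) j"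
    using exists_min_gen[OF m] by blast
  have "\<not> (\<exists>j. j \<notin> F \<and> int (nu j u) > a j \<and> a j \<ge> 0)"
  proof
    assume "\<exists>j. j \<notin> F \<and> int (nu j u) > a j \<and> a j \<ge> 0"
    then obtain j where j: "j \<notin> F" "int (nu j u) > a j" "a j \<ge> 0" by blast
    have "Poly_Mapping.lookup u j \<le> Poly_Mapping.lookup (pm (\<lambda>i. m * ind F i) + ev F a k0) j"
      using u(2) by blast
    also have "\<dots> = nat (a j)" using j(1) by (simp add: lookup_add ev_def dg_def ind_def)
    finally have "int (Poly_Mapping.lookup u j) \<le> a j" using j(3) by simp
    then show False using j(2) by (simp add: nu_def)
  qed
  then show "\<not> (\<forall>u\<in>min_gens I. \<exists>j. j \<notin> F \<and> int (nu j u) > a j \<and> a j \<ge> 0)"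
    using u(1) by blast
next
  assume "\<not> (\<forall>u\<in>min_gens I. \<exists>j. j \<notin> F \<and> int (nu j u) > a j \<and> a j \<ge> 0)"
  then obtain u where u: "u \<in> min_gens I" "\<And>j. \<not> (j \<notin> F \<and> int (nu j u) > a j \<and> a j \<ge> 0)"
    by blast
  define m where "m = (\<Sum>j\<in>UNIV. Poly_Mapping.lookup u j)"
  have le: "\<forall>j. Poly_Mapping.lookup u j \<le> Poly_Mapping.lookup (pm (\<lambda>i. m * ind F i) + ev F a k0) j"
  proof
    fix j
    show "Poly_Mapping.lookup u j \<le> Poly_Mapping.lookup (pm (\<lambda>i. m * ind F i) + ev F a k0) j"
    proof (cases "j \<in> F")
      case True
      have "Poly_Mapping.lookup u j \<le> m" unfolding m_def by (rule member_le_sum) simp_all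
      then show ?thesis using True by (simp add: lookup_add ev_def ind_def)
    next
      case False
      then have "a j \<ge> 0" using G unfolding G_neg_def by force
      then have "int (Poly_Mapping.lookup u j) \<le> a j" using u(2)[of j] False by (force simp: nu_def)
      then show ?thesis using False by (simp add: lookup_add ev_def dg_def ind_def)
    qed
  qed
  have "monom u \<in> I" using u(1) unfolding min_gens_def by blast
  then have "monom (pm (\<lambda>i. m * ind F i) + ev F a k0) \<in> I"
    using monom_le[OF mi_ideal[OF mi] _ le] by blast
  then show "\<exists>m. monom (pm (\<lambda>i. m * ind F i) + ev F a k0) \<in> I" by blast
qed


lemma hom_zero_poly: "homogeneous (0 :: ('v,'k::field) mpoly) d"
  by (simp add: homogeneous_def)

theorem lemma1p1:
  fixes I :: "('v::finite, 'k::field) mpoly set" and F :: "'v set" and a :: "'v \<Rightarrow> int"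
  assumes "monomial_ideal I"
  shows "dim_le_1 I F (loc_comp I F a) \<and>
    (iso_to_K I F (loc_comp I F a) \<longleftrightarrow>
      (G_neg a \<subseteq> F \<and> (\<forall>u\<in>min_gens I. \<exists>j. j \<notin> F \<and> int (nu j u) > a j \<and> a j \<ge> 0)))"
proof -
  have iI: "is_ideal I" by (rule mi_ideal[OF assms])
  define Z where "Z = frac I F 0 0"
  have smZ: "loc_smult I F c Z = Z" for c
    unfolding Z_def loc_smult_frac[OF iI] by simp
  have noiso: False if iso: "iso_to_K I F (loc_comp I F a)" and one: "loc_comp I F a = {Z}"
  proof -
    obtain \<phi> where b: "bij_betw \<phi> (UNIV :: 'k set) (loc_comp I F a)"
      using iso unfolding iso_to_K_def by blast
    then have "\<phi> 0 = Z" "\<phi> 1 = Z" using bij_betwE[OF b] one by blast+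
    then have "\<phi> 0 = \<phi> 1" by simp
    moreover have "inj \<phi>" using b bij_betw_def by blast
    ultimately have "(0::'k) = 1" by (meson injD)
    then show False by simp
  qed
  show ?thesis
  proof (cases "G_neg a \<subseteq> F")
    case False
    then obtain i where i: "a i < 0" "i \<notin> F" unfolding G_neg_def by auto
    have nok: "\<not> (\<forall>i. dg F a k i \<ge> 0)" for k
    proof
      assume "\<forall>i. dg F a k i \<ge> 0"
      then have "dg F a k i \<ge> 0" by blast
      then show False using i unfolding dg_def by simp
    qed
    have comp: "loc_comp I F a = {Z}"
    proof
      show "loc_comp I F a \<subseteq> {Z}"
      proof
        fix P assume "P \<in> loc_comp I F a"
        then obtain f k where P: "P = frac I F f k" "homogeneous f (dg F a k)"
          unfolding loc_comp_alt by blast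
        have "f = 0" by (rule hom_zero[OF P(2) nok])
        then show "P \<in> {Z}" using P(1) frac_zero[OF iI] Z_def by simp
      qed
    next
      have "Z \<in> loc_comp I F a" unfolding loc_comp_alt Z_def using hom_zero_poly by blast
      then show "{Z} \<subseteq> loc_comp I F a" by simp
    qed
    have "dim_le_1 I F (loc_comp I F a)"
      unfolding dim_le_1_def comp using smZ by simp
    moreover have "\<not> iso_to_K I F (loc_comp I F a)" using noiso[OF _ comp] by blast
    ultimately show ?thesis using False by blast
  next
    case True
    let ?C = "\<forall>u\<in>min_gens I. \<exists>j. j \<notin> F \<and> int (nu j u) > a j \<and> a j \<ge> 0"
    define k0 where "k0 = (\<Sum>i\<in>UNIV. nat (- a i))"
    have ok: "ok F a k0"
      unfolding ok_def
    proof
      fix i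
      show "0 \<le> dg F a k0 i"
      proof (cases "i \<in> F")
        case True
        have "nat (- a i) \<le> k0" unfolding k0_def by (rule member_le_sum) simp_all
        then have "- a i \<le> int k0" by linarith
        then show ?thesis using True unfolding dg_def by simp
      next
        case False
        then have "a i \<ge> 0" using \<open>G_neg a \<subseteq> F\<close> unfolding G_neg_def by force
        then show ?thesis using False unfolding dg_def by simp
      qed
    qed
    define v where "v c = frac I F (Poly_Mapping.single (ev F a k0) c) k0" for c
    have v0: "v 0 = Z" unfolding v_def Z_def using frac_zero[OF iI] by simp
    have comp: "loc_comp I F a = range v"
    proof
      show "loc_comp I F a \<subseteq> range v"
      proof
        fix P assume "P \<in> loc_comp I F a"
        then obtain f k where P: "P = frac I F f k" "homogeneous f (dg F a k)"
          unfolding loc_comp_alt by blast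
        show "P \<in> range v"
        proof (cases "ok F a k")
          case True
          have fe: "f = Poly_Mapping.single (ev F a k) (Poly_Mapping.lookup f (ev F a k))"
            using hom_char[OF P(2)] unfolding ev_def by simp
          have "P = v (Poly_Mapping.lookup f (ev F a k))"
            unfolding v_def P(1) by (subst fe) (rule frac_E[OF iI True ok])
          then show ?thesis by blast
        next
          case False
          then have "f = 0" using hom_zero[OF P(2)] unfolding ok_def by blast
          then have "P = v 0" using P(1) frac_zero[OF iI] v0 Z_def by simp
          then show ?thesis by blast
        qed
      qed
    next
      show "range v \<subseteq> loc_comp I F a"
      proof
        fix P assume "P \<in> range v"
        then obtain c where c: "P = v c" by blast
        have "homogeneous (Poly_Mapping.single (ev F a k0) c :: ('v,'k) mpoly) (dg F a k0)"
          unfolding ev_def by (rule hom_single) (use ok in \<open>simp add: ok_def\<close>)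
        then show "P \<in> loc_comp I F a" unfolding loc_comp_alt c v_def by blast
      qed
    qed
    have sm: "loc_smult I F c (v d) = v (c * d)" for c d
      unfolding v_def loc_smult_frac[OF iI] by (simp add: const_single)
    have ad: "loc_add I F (v c) (v d) = v (c + d)" for c d
    proof -
      have "loc_add I F (v c) (v d) = frac I F (Poly_Mapping.single (ev F a (k0 + k0)) (c + d)) (k0 + k0)"
        unfolding v_def loc_add_frac[OF iI] shift[OF ok] by (simp add: single_add)
      also have "\<dots> = v (c + d)" unfolding v_def by (rule frac_E[OF iI ok_mono[OF ok] ok])
      finally show ?thesis .
    qed
    have zero: "v c = Z \<longleftrightarrow> (c = 0 \<or> \<not> ?C)" for c
      unfolding v_def Z_def frac_N[OF assms] lemD[OF assms True ok] by simp
    have dim: "dim_le_1 I F (loc_comp I F a)"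
      unfolding dim_le_1_def comp
    proof (rule bexI[of _ "v 1"])
      show "\<forall>P\<in>range v. \<exists>c. P = loc_smult I F c (v 1)"
        using sm by auto
    qed simp
    have "iso_to_K I F (loc_comp I F a) \<longleftrightarrow> ?C"
    proof
      assume iso: "iso_to_K I F (loc_comp I F a)"
      show ?C
      proof (rule ccontr)
        assume "\<not> ?C"
        then have "\<forall>c. v c = Z" using zero by blast
        then have "loc_comp I F a = {Z}" unfolding comp by auto
        then show False by (rule noiso[OF iso])
      qed
    next
      assume C: ?C
      have "inj v"
      proof (rule injI)
        fix c d assume e: "v c = v d"
        have "v (c - d) = loc_add I F (v c) (v (- d))" by (simp add: ad)
        also have "\<dots> = loc_add I F (v d) (v (- d))" using e by simp
        also have "\<dots> = Z" by (simp add: ad v0)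
        finally have "c - d = 0" using zero C by blast
        then show "c = d" by simp
      qed
      then have "bij_betw v (UNIV :: 'k set) (loc_comp I F a)"
        unfolding comp bij_betw_def by simp
      then show "iso_to_K I F (loc_comp I F a)"
        unfolding iso_to_K_def by (intro exI[of _ v] conjI allI) (simp_all add: ad sm)
    qed
    then show ?thesis using dim True by blast
  qed
qed

end
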